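(* Let $\mathcal U$ be a finite set, $R_0,\dots,R_{k-1}$ be $n$-place relations on $\mathcal U$, and let $R$ be an $n$-place relation on $\mathcal U$ which is a Boolean combination of $R_0,\dots,R_{k-1}$. Then $\lambda'_0(R)\le\sum_{\ell<k}\lambda'_0(R_\ell)$, and hence $\lambda_0(R)\le\sum_{\ell<k}\lambda_0(R_\ell)$.
   Context: For $A\subseteq\mathcal U$ and $n$-tuples $\bar b=\langle b_i\rangle,\bar c=\langle c_i\rangle$ from $\mathcal U$, $\bar b\approx_A\bar c$ means: $b_i\in A\iff c_i\in A$; $b_i\in A\Rightarrow b_i=c_i$; and $b_i=b_j\iff c_i=c_j$. For an $n$-place relation $S$ on $\mathcal U$, $\lambda'_0(S)$ is the least $|A|$ over $A\subseteq\mathcal U$ such that for all $n$-tuples $\bar b,\bar c$ from $\mathcal U$, $\bar b\approx_A\bar c$ implies ($S(\bar b)\iff S(\bar c)$); and $\lambda_0(S)=\min\{\lfloor|\mathcal U|/2\rfloor,\lambda'_0(S)\}$. *)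

theory Defs
  imports Main
begin

(* n-tuples from U are lists of length n with entries in U;
   an n-place relation on U is a predicate on such lists *)
definition tuples :: "'a set \<Rightarrow> nat \<Rightarrow> 'a list set" where
  "tuples U n = {b. length b = n \<and> set b \<subseteq> U}"

definition approx_on :: "'a set \<Rightarrow> 'a list \<Rightarrow> 'a list \<Rightarrow> bool" where
  "approx_on A b c \<longleftrightarrow> length b = length c \<and>
     (\<forall>i < length b. (b!i \<in> A \<longleftrightarrow> c!i \<in> A) \<and> (b!i \<in> A \<longrightarrow> b!i = c!i) \<and>
        (\<forall>j < length b. b!i = b!j \<longleftrightarrow> c!i = c!j))"

definition supports :: "'a set \<Rightarrow> nat \<Rightarrow> ('a list \<Rightarrow> bool) \<Rightarrow> 'a set \<Rightarrow> bool" where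
  "supports U n S A \<longleftrightarrow> (\<forall>b \<in> tuples U n. \<forall>c \<in> tuples U n.
       approx_on A b c \<longrightarrow> (S b \<longleftrightarrow> S c))"

definition lambda0' :: "'a set \<Rightarrow> nat \<Rightarrow> ('a list \<Rightarrow> bool) \<Rightarrow> nat" where
  "lambda0' U n S = (LEAST m. \<exists>A. A \<subseteq> U \<and> card A = m \<and> supports U n S A)"

definition lambda0 :: "'a set \<Rightarrow> nat \<Rightarrow> ('a list \<Rightarrow> bool) \<Rightarrow> nat" where
  "lambda0 U n S = min (card U div 2) (lambda0' U n S)"

definition bool_comb :: "'a set \<Rightarrow> nat \<Rightarrow> nat \<Rightarrow> (nat \<Rightarrow> 'a list \<Rightarrow> bool) \<Rightarrow> ('a list \<Rightarrow> bool) \<Rightarrow> bool" where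
  "bool_comb U n k Rs R \<longleftrightarrow> (\<exists>f :: bool list \<Rightarrow> bool.
      \<forall>b \<in> tuples U n. R b \<longleftrightarrow> f (map (\<lambda>l. Rs l b) [0..<k]))"

end

theory Submission
  imports Defs
begin

lemma approx_mono: "approx_on B b c \<Longrightarrow> A \<subseteq> B \<Longrightarrow> approx_on A b c"
  unfolding approx_on_def
proof (elim conjE, intro conjI allI impI)
  fix i assume h: "\<forall>i < length b. (b!i \<in> B \<longleftrightarrow> c!i \<in> B) \<and> (b!i \<in> B \<longrightarrow> b!i = c!i) \<and>
        (\<forall>j < length b. b!i = b!j \<longleftrightarrow> c!i = c!j)" and AB: "A \<subseteq> B" and i: "i < length b"
  have 1: "b!i \<in> B \<longleftrightarrow> c!i \<in> B" and 2: "b!i \<in> B \<longrightarrow> b!i = c!i"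
    and 3: "\<forall>j < length b. b!i = b!j \<longleftrightarrow> c!i = c!j" using h i by blast+
  show "b!i \<in> A \<Longrightarrow> b!i = c!i" using 2 AB by auto
  show "b!i \<in> A \<longleftrightarrow> c!i \<in> A" using 1 2 AB by auto
  fix j assume "j < length b" then show "b!i = b!j \<longleftrightarrow> c!i = c!j" using 3 by blast
qed

lemma supports_mono: "supports U n S A \<Longrightarrow> A \<subseteq> B \<Longrightarrow> supports U n S B"
  unfolding supports_def using approx_mono by blast

lemma supports_U: "supports U n S U"
proof -
  have "b = c" if "b \<in> tuples U n" "c \<in> tuples U n" "approx_on U b c" for b c
  proof (rule nth_equalityI)
    have h: "length b = length c \<and>
     (\<forall>i < length b. (b!i \<in> U \<longleftrightarrow> c!i \<in> U) \<and> (b!i \<in> U \<longrightarrow> b!i = c!i) \<and>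
        (\<forall>j < length b. b!i = b!j \<longleftrightarrow> c!i = c!j))" using that(3) unfolding approx_on_def .
    then show "length b = length c" by (rule conjunct1)
    fix i assume i: "i < length b"
    have "set b \<subseteq> U" using that(1) by (simp add: tuples_def)
    then have "b!i \<in> U" using i nth_mem by blast
    moreover have "b!i \<in> U \<longrightarrow> b!i = c!i" using h i by blast
    ultimately show "b!i = c!i" by blast
  qed
  then show ?thesis unfolding supports_def by blast
qed

lemma lambda_ex: "\<exists>A. A \<subseteq> U \<and> card A = lambda0' U n S \<and> supports U n S A"
  unfolding lambda0'_def
  by (rule LeastI[where k="card U"]) (use supports_U in blast)

lemma min_sum:
  fixes g :: "nat \<Rightarrow> nat"
  assumes "finite K" "x \<le> sum g K"
  shows "min h x \<le> (\<Sum>l\<in>K. min h (g l))"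
proof (cases "\<exists>l\<in>K. h \<le> g l")
  case True
  then obtain l where "l \<in> K" "h \<le> g l" by blast
  then have "min h (g l) \<le> (\<Sum>l\<in>K. min h (g l))"
    using assms(1) by (intro member_le_sum) auto
  then show ?thesis using \<open>h \<le> g l\<close> by simp
next
  case False
  then have "(\<Sum>l\<in>K. min h (g l)) = sum g K" by (intro sum.cong) auto
  then show ?thesis using assms by simp
qed

theorem claim2p6:
  fixes U :: "'a set" and n k :: nat and Rs :: "nat \<Rightarrow> 'a list \<Rightarrow> bool" and R :: "'a list \<Rightarrow> bool"
  assumes "finite U"
    and "bool_comb U n k Rs R"
  shows "lambda0' U n R \<le> (\<Sum>l<k. lambda0' U n (Rs l))
     \<and> lambda0 U n R \<le> (\<Sum>l<k. lambda0 U n (Rs l))"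
proof -
  obtain f where f: "\<forall>b \<in> tuples U n. R b \<longleftrightarrow> f (map (\<lambda>l. Rs l b) [0..<k])"
    using assms(2) unfolding bool_comb_def by blast
  have "\<forall>l. \<exists>A. A \<subseteq> U \<and> card A = lambda0' U n (Rs l) \<and> supports U n (Rs l) A"
    using lambda_ex by blast
  then obtain A where A0: "\<forall>l. A l \<subseteq> U \<and> card (A l) = lambda0' U n (Rs l) \<and> supports U n (Rs l) (A l)"
    by (rule choice_iff[THEN iffD1, THEN exE])
  have AU: "\<And>l. A l \<subseteq> U" and Ac: "\<And>l. card (A l) = lambda0' U n (Rs l)"
    and As: "\<And>l. supports U n (Rs l) (A l)" using A0 by auto
  define B where "B = (\<Union>l<k. A l)"
  have BU: "B \<subseteq> U" using AU unfolding B_def by blast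
  have sB: "supports U n R B"
    unfolding supports_def
  proof (intro ballI impI)
    fix b c assume b: "b \<in> tuples U n" and c: "c \<in> tuples U n" and ap: "approx_on B b c"
    have "Rs l b = Rs l c" if "l < k" for l
    proof -
      have "A l \<subseteq> B" using that unfolding B_def by blast
      then have "approx_on (A l) b c" by (rule approx_mono[OF ap])
      then show ?thesis using As[of l] b c unfolding supports_def by blast
    qed
    then have "map (\<lambda>l. Rs l b) [0..<k] = map (\<lambda>l. Rs l c) [0..<k]" by simp
    moreover have "R b = f (map (\<lambda>l. Rs l b) [0..<k])" using f b by blast
    moreover have "R c = f (map (\<lambda>l. Rs l c) [0..<k])" using f c by blast
    ultimately show "R b = R c" by argo
  qed
  have "lambda0' U n R \<le> card B"
    unfolding lambda0'_def using BU sB by (intro Least_le) blast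
  also have "\<dots> \<le> (\<Sum>l<k. card (A l))" unfolding B_def by (rule card_UN_le) simp
  also have "\<dots> = (\<Sum>l<k. lambda0' U n (Rs l))" by (simp add: Ac)
  finally have 1: "lambda0' U n R \<le> (\<Sum>l<k. lambda0' U n (Rs l))" .
  have "lambda0 U n R \<le> (\<Sum>l<k. lambda0 U n (Rs l))"
    unfolding lambda0_def by (rule min_sum) (use 1 in auto)
  with 1 show ?thesis by blast
qed

end
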